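(* Let $m \geq 0$, $n \geq 1$ be integers. Consider the following algorithm with input a stable configuration $c = (c^t; c^b)$ on $K_{m,n}^0$: (1) replace $c^b$ by its non-decreasing rearrangement $(\tilde c^b_1, \ldots, \tilde c^b_n)$, computed by counting sort (using that all entries lie in $\{0, \ldots, m\}$); (2) compute $k_j := |\{ i \in \{1,\ldots,m\} : c^t_i < j\}|$ for $j = 1, \ldots, n$ by first counting, for each $0 \le \ell \le n-1$, the number $k'_\ell$ of indices $i$ with $c^t_i = \ell$, and then taking prefix sums $k_j = k'_0 + \cdots + k'_{j-1}$; (3) set $\mathrm{sumK} = \mathrm{sumC} = 0$, and for $j = 1, \ldots, n$ update $\mathrm{sumK} \gets \mathrm{sumK} + k_j$, $\mathrm{sumC} \gets \mathrm{sumC} + \tilde c^b_j$, and return False if $\mathrm{sumC} < \mathrm{sumK}$; (4) if the loop completes, return True. Then this algorithm returns True if and only if $c$ is stochastically recurrent, and it runs in $O(m+n)$ time.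
   Context: $K_{m,n}^0$ is the complete bipartite graph with "top" vertices $v^t_0, v^t_1, \ldots, v^t_m$ and "bottom" vertices $v^b_1, \ldots, v^b_n$, with an edge between every top vertex and every bottom vertex; $v^t_0$ is called the sink. A configuration is a vector $c = (c^t_1, \ldots, c^t_m; c^b_1, \ldots, c^b_n)$ of non-negative integers ($c^*_i$ = number of grains at $v^*_i$). A non-sink vertex is stable if its number of grains is less than its degree, i.e. $c^t_i < n$, resp. $c^b_j < m+1$; $c$ is stable if all non-sink vertices are stable. Stochastic sandpile model (SSM) with a fixed parameter $p \in (0,1)$: an unstable vertex topples as follows: for each of its neighbours (for a bottom vertex this includes the sink), independently (and independently of all previous topplings), with probability $p$ it sends one grain to that neighbour, and otherwise keeps that grain; grains sent to the sink disappear. Starting from any configuration and repeatedly toppling unstable vertices, one reaches a (random) stable configuration whose law does not depend on the toppling order. Consider the Markov chain on stable configurations which at each step adds a grain to a non-sink vertex chosen uniformly at random and then stabilises according to the SSM. A stable configuration is stochastically recurrent if it is a recurrent state of this Markov chain (appears infinitely often in its long-time running). *)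

theory Defs
  imports Main "HOL.Real"
begin

text \<open>Configurations on K_{m,n}^0 (sink excluded): a pair (ct, cb) of lists,
  ct ! i = grains at top vertex v^t_{i+1} (i < m), cb ! j = grains at bottom
  vertex v^b_{j+1} (j < n).\<close>

type_synonym config = "nat list \<times> nat list"

definition config_of :: "nat \<Rightarrow> nat \<Rightarrow> config \<Rightarrow> bool" where
  "config_of m n c \<longleftrightarrow> length (fst c) = m \<and> length (snd c) = n"

text \<open>Top vertices have degree n, bottom vertices have degree m+1.\<close>
definition stable_config :: "nat \<Rightarrow> nat \<Rightarrow> config \<Rightarrow> bool" where
  "stable_config m n c \<longleftrightarrow> config_of m n c \<and>
     (\<forall>i<m. fst c ! i < n) \<and> (\<forall>j<n. snd c ! j < m + 1)"

text \<open>One stochastic toppling of an unstable vertex, with a possible outcome: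
  the set S of neighbours (and, for a bottom vertex, whether the sink) that
  receive a grain; such an outcome has probability p^|sent| (1-p)^(deg-|sent|).
  The relation holds iff c' is an outcome of positive probability.\<close>
definition topple_top :: "real \<Rightarrow> nat \<Rightarrow> nat \<Rightarrow> config \<Rightarrow> config \<Rightarrow> bool" where
  "topple_top p m n c c' \<longleftrightarrow> config_of m n c \<and>
     (\<exists>i<m. fst c ! i \<ge> n \<and> (\<exists>S \<subseteq> {..<n}.
        p ^ card S * (1 - p) ^ (n - card S) > 0 \<and>
        c' = (map (\<lambda>k. if k = i then fst c ! k - card S else fst c ! k) [0..<m],
              map (\<lambda>j. if j \<in> S then snd c ! j + 1 else snd c ! j) [0..<n])))"

definition topple_bot :: "real \<Rightarrow> nat \<Rightarrow> nat \<Rightarrow> config \<Rightarrow> config \<Rightarrow> bool" where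
  "topple_bot p m n c c' \<longleftrightarrow> config_of m n c \<and>
     (\<exists>j<n. snd c ! j \<ge> m + 1 \<and> (\<exists>S \<subseteq> {..<m}. \<exists>s::bool.
        (let tot = card S + (if s then 1 else 0) in
          p ^ tot * (1 - p) ^ (m + 1 - tot) > 0 \<and>
          c' = (map (\<lambda>k. if k \<in> S then fst c ! k + 1 else fst c ! k) [0..<m],
                map (\<lambda>l. if l = j then snd c ! l - tot else snd c ! l) [0..<n]))))"

definition topple :: "real \<Rightarrow> nat \<Rightarrow> nat \<Rightarrow> config \<Rightarrow> config \<Rightarrow> bool" where
  "topple p m n c c' \<longleftrightarrow> topple_top p m n c c' \<or> topple_bot p m n c c'"

text \<open>Support of the (order-independent) law of the SSM stabilisation of d.\<close>
definition stabilises_to :: "real \<Rightarrow> nat \<Rightarrow> nat \<Rightarrow> config \<Rightarrow> config \<Rightarrow> bool" where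
  "stabilises_to p m n d c' \<longleftrightarrow> (topple p m n)\<^sup>*\<^sup>* d c' \<and> stable_config m n c'"

text \<open>Add a grain to non-sink vertex v: v < m is top vertex v, m \<le> v < m+n is
  bottom vertex v - m.\<close>
definition add_grain :: "nat \<Rightarrow> nat \<Rightarrow> nat \<Rightarrow> config \<Rightarrow> config" where
  "add_grain m n v c = (if v < m then ((fst c)[v := fst c ! v + 1], snd c)
                        else (fst c, (snd c)[v - m := snd c ! (v - m) + 1]))"

text \<open>Positive-probability transitions of the Markov chain on stable configurations
  (each non-sink vertex is chosen with probability 1/(m+n) > 0).\<close>
definition chain_step :: "real \<Rightarrow> nat \<Rightarrow> nat \<Rightarrow> config \<Rightarrow> config \<Rightarrow> bool" where
  "chain_step p m n c c' \<longleftrightarrow> stable_config m n c \<and>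
     (\<exists>v < m + n. stabilises_to p m n (add_grain m n v c) c')"

text \<open>Recurrent state of a finite-state Markov chain: every state reachable from c
  can reach c back.\<close>
definition stoch_recurrent :: "real \<Rightarrow> nat \<Rightarrow> nat \<Rightarrow> config \<Rightarrow> bool" where
  "stoch_recurrent p m n c \<longleftrightarrow> stable_config m n c \<and>
     (\<forall>d. (chain_step p m n)\<^sup>*\<^sup>* c d \<longrightarrow> (chain_step p m n)\<^sup>*\<^sup>* d c)"

section \<open>The algorithm, with an elementary-step counter (second component)\<close>

fun count_loop :: "nat list \<Rightarrow> nat list \<Rightarrow> nat list \<times> nat" where
  "count_loop cnt [] = (cnt, 0)"
| "count_loop cnt (x # xs) =
     (let (r, t) = count_loop (cnt[x := cnt ! x + 1]) xs in (r, Suc t))"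

definition counting :: "nat \<Rightarrow> nat list \<Rightarrow> nat list \<times> nat" where
  "counting K xs = (let (cnt, t) = count_loop (replicate K 0) xs in (cnt, K + t))"

fun emit :: "nat \<Rightarrow> nat list \<Rightarrow> nat list \<times> nat" where
  "emit v [] = ([], 0)"
| "emit v (k # ks) = (let (r, t) = emit (Suc v) ks in (replicate k v @ r, Suc k + t))"

definition counting_sort :: "nat \<Rightarrow> nat list \<Rightarrow> nat list \<times> nat" where
  "counting_sort m xs = (let (cnt, t1) = counting (m + 1) xs; (r, t2) = emit 0 cnt
                         in (r, t1 + t2))"

fun prefix_sums :: "nat \<Rightarrow> nat list \<Rightarrow> nat list \<times> nat" where
  "prefix_sums acc [] = ([], 0)"
| "prefix_sums acc (x # xs) =
     (let (r, t) = prefix_sums (acc + x) xs in ((acc + x) # r, Suc t))"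

fun check_loop :: "nat \<Rightarrow> nat \<Rightarrow> nat list \<Rightarrow> nat list \<Rightarrow> bool \<times> nat" where
  "check_loop sumK sumC (k # ks) (c # cs) =
     (let sK = sumK + k; sC = sumC + c in
       if sC < sK then (False, 1)
       else (let (r, t) = check_loop sK sC ks cs in (r, Suc t)))"
| "check_loop sumK sumC _ _ = (True, 1)"

definition ssm_algorithm :: "nat \<Rightarrow> nat \<Rightarrow> config \<Rightarrow> bool \<times> nat" where
  "ssm_algorithm m n c =
     (let (sb, t1) = counting_sort m (snd c);
          (kp, t2) = counting n (fst c);
          (ks, t3) = prefix_sums 0 kp;
          (res, t4) = check_loop 0 0 ks sb
      in (res, t1 + t2 + t3 + t4))"

end

theory Submission
  imports Defs "HOL-Combinatorics.List_Permutation"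
begin

lemma count_loop_len: "length (fst (count_loop cnt xs)) = length cnt"
  by (induction xs arbitrary: cnt) (auto simp: case_prod_beta)

lemma count_loop_time: "snd (count_loop cnt xs) = length xs"
  by (induction xs arbitrary: cnt) (auto simp: case_prod_beta)

lemma count_loop_nth:
  "(\<forall>x\<in>set xs. x < length cnt) \<Longrightarrow> l < length cnt \<Longrightarrow>
   fst (count_loop cnt xs) ! l = cnt ! l + count_list xs l"
proof (induction xs arbitrary: cnt)
  case Nil then show ?case by simp
next
  case (Cons x xs)
  have "fst (count_loop cnt (x # xs)) = fst (count_loop (cnt[x := cnt ! x + 1]) xs)"
    by (simp split: prod.splits)
  also have "\<dots> ! l = cnt[x := cnt ! x + 1] ! l + count_list xs l"
    using Cons by simp
  finally show ?case using Cons.prems by (auto simp: nth_list_update)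
qed

lemma counting_props:
  assumes "\<forall>x\<in>set xs. x < K"
  shows "length (fst (counting K xs)) = K"
    "\<And>l. l < K \<Longrightarrow> fst (counting K xs) ! l = count_list xs l"
    "snd (counting K xs) = K + length xs"
  using assms count_loop_len[of "replicate K 0" xs] count_loop_time[of "replicate K 0" xs]
    count_loop_nth[of xs "replicate K 0"]
  by (auto simp: counting_def split: prod.splits)

lemma emit_time: "snd (emit v ks) = length (fst (emit v ks)) + length ks"
  by (induction ks arbitrary: v) (auto simp: case_prod_beta)

lemma emit_count:
  "count (mset (fst (emit v ks))) x = (if v \<le> x \<and> x < v + length ks then ks ! (x - v) else 0)"
proof (induction ks arbitrary: v)
  case Nil then show ?case by simp
next
  case (Cons k ks)
  have e: "fst (emit v (k # ks)) = replicate k v @ fst (emit (Suc v) ks)"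
    by (simp split: prod.splits)
  show ?case unfolding e using Cons[of "Suc v"]
    by (auto simp: count_replicate_mset nth_Cons' split: if_splits)
qed

lemma emit_sorted:
  "sorted (fst (emit v ks)) \<and> (\<forall>y\<in>set (fst (emit v ks)). v \<le> y)"
proof (induction ks arbitrary: v)
  case Nil then show ?case by simp
next
  case (Cons k ks)
  have e: "fst (emit v (k # ks)) = replicate k v @ fst (emit (Suc v) ks)"
    by (simp split: prod.splits)
  show ?case unfolding e using Cons[of "Suc v"]
    by (auto simp: sorted_append)
qed

lemma counting_sort_props:
  assumes "\<forall>x\<in>set xs. x \<le> m"
  shows "sorted (fst (counting_sort m xs))" "mset (fst (counting_sort m xs)) = mset xs"
    "snd (counting_sort m xs) = 2 * (m + 1) + 2 * length xs"
proof -
  have a: "\<forall>x\<in>set xs. x < m + 1" using assms by auto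
  obtain cnt t1 where c: "counting (m + 1) xs = (cnt, t1)" by fastforce
  obtain r t2 where e: "emit 0 cnt = (r, t2)" by fastforce
  have cs: "counting_sort m xs = (r, t1 + t2)"
    using c e by (simp add: counting_sort_def)
  have lc: "length cnt = m + 1" and nc: "\<And>l. l < m + 1 \<Longrightarrow> cnt ! l = count_list xs l"
    and t1: "t1 = m + 1 + length xs"
    using counting_props[OF a] c by auto
  show "sorted (fst (counting_sort m xs))" using cs e emit_sorted[of 0 cnt] by simp
  have ms: "mset r = mset xs"
  proof (rule multiset_eqI)
    fix x
    have "count (mset r) x = (if x < m + 1 then cnt ! x else 0)"
      using emit_count[of 0 cnt x] e lc by simp
    also have "\<dots> = count (mset xs) x"
      using nc a by (auto simp: count_mset count_list_0_iff)
    finally show "count (mset r) x = count (mset xs) x" .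
  qed
  then show "mset (fst (counting_sort m xs)) = mset xs" using cs by simp
  have "length r = length xs" using ms by (metis size_mset)
  then have "t2 = length xs + m + 1" using emit_time[of 0 cnt] e lc by simp
  then show "snd (counting_sort m xs) = 2 * (m + 1) + 2 * length xs" using cs t1 by simp
qed

lemma prefix_sums_props:
  "length (fst (prefix_sums acc xs)) = length xs \<and> snd (prefix_sums acc xs) = length xs \<and>
   (\<forall>l<length xs. fst (prefix_sums acc xs) ! l = acc + (\<Sum>i\<le>l. xs ! i))"
proof (induction xs arbitrary: acc)
  case Nil then show ?case by simp
next
  case (Cons x xs)
  have e: "prefix_sums acc (x # xs) = ((acc + x) # fst (prefix_sums (acc + x) xs), Suc (snd (prefix_sums (acc + x) xs)))"
    by (simp split: prod.splits)
  have s: "(\<Sum>i\<le>Suc l. (x # xs) ! i) = x + (\<Sum>i\<le>l. xs ! i)" for l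
    by (subst sum.atMost_Suc_shift) simp
  show ?case unfolding e using Cons[of "acc + x"]
    by (simp add: All_less_Suc2 s add.assoc del: sum.atMost_Suc)
qed

lemma check_loop_props:
  "length ks = length cs \<Longrightarrow>
   (fst (check_loop sK sC ks cs) \<longleftrightarrow>
     (\<forall>j<length ks. sK + (\<Sum>l\<le>j. ks ! l) \<le> sC + (\<Sum>l\<le>j. cs ! l))) \<and>
   snd (check_loop sK sC ks cs) \<le> length ks + 1"
proof (induction sK sC ks cs rule: check_loop.induct)
  case (1 sumK sumC k ks c cs)
  have s: "(\<Sum>i\<le>Suc l. (x # xs) ! i) = x + (\<Sum>i\<le>l. xs ! i)" for l and x :: nat and xs
    by (subst sum.atMost_Suc_shift) simp
  show ?case
  proof (cases "sumC + c < sumK + k")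
    case True then show ?thesis by (auto simp: Let_def)
  next
    case False
    have e: "check_loop sumK sumC (k # ks) (c # cs) =
      (fst (check_loop (sumK + k) (sumC + c) ks cs), Suc (snd (check_loop (sumK + k) (sumC + c) ks cs)))"
      using False by (simp add: Let_def case_prod_beta)
    have IH: "(fst (check_loop (sumK + k) (sumC + c) ks cs) \<longleftrightarrow>
     (\<forall>j<length ks. sumK + k + (\<Sum>l\<le>j. ks ! l) \<le> sumC + c + (\<Sum>l\<le>j. cs ! l))) \<and>
     snd (check_loop (sumK + k) (sumC + c) ks cs) \<le> length ks + 1"
      using 1 False by (simp add: Let_def)
    show ?thesis unfolding e using IH False
      by (simp add: All_less_Suc2 s add.assoc del: sum.atMost_Suc)
  qed
qed auto

lemma count_list_sum: "count_list xs v = (\<Sum>i<length xs. if xs ! i = v then 1 else 0)"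
  by (simp add: count_list_eq_length_filter length_filter_conv_card sum.If_cases lessThan_def
      flip: Collect_conj_eq) (rule arg_cong[where f=card], auto)

lemma sum_count_le: fixes xs :: "nat list" shows "(\<Sum>v\<le>l. count_list xs v) = (\<Sum>i<length xs. if xs ! i \<le> l then 1 else 0)"
proof -
  have "(\<Sum>v\<le>l. count_list xs v) = (\<Sum>i<length xs. \<Sum>v\<le>l. if xs ! i = v then 1 else 0)"
    unfolding count_list_sum by (rule sum.swap)
  also have "\<dots> = (\<Sum>i<length xs. if xs ! i \<le> l then 1 else 0)"
    by (rule sum.cong) (simp, subst sum.delta', simp_all)
  finally show ?thesis .
qed

lemma sum_sum_count: fixes xs :: "nat list" shows
  "(\<Sum>l\<le>j. \<Sum>v\<le>l. count_list xs v) = (\<Sum>i<length xs. Suc j - xs ! i)"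
proof -
  have "(\<Sum>l\<le>j. \<Sum>v\<le>l. count_list xs v) = (\<Sum>i<length xs. \<Sum>l\<le>j. if xs ! i \<le> l then 1 else 0)"
    unfolding sum_count_le by (rule sum.swap)
  also have "\<dots> = (\<Sum>i<length xs. Suc j - xs ! i)"
  proof (rule sum.cong)
    fix i
    have "(\<Sum>l\<le>j. if xs ! i \<le> l then 1 else (0::nat)) = card {l. l \<le> j \<and> xs ! i \<le> l}"
      by (simp add: sum.If_cases atMost_def Int_def conj_commute)
    also have "{l. l \<le> j \<and> xs ! i \<le> l} = {xs ! i..j}" by auto
    finally show "(\<Sum>l\<le>j. if xs ! i \<le> l then 1 else (0::nat)) = Suc j - xs ! i" by simp
  qed simp
  finally show ?thesis .
qed

lemma alg_props:
  assumes st: "stable_config m n c" and n1: "1 \<le> n"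
  shows "fst (ssm_algorithm m n c) \<longleftrightarrow>
           (\<forall>j<n. (\<Sum>i<m. Suc j - fst c ! i) \<le> (\<Sum>l\<le>j. fst (counting_sort m (snd c)) ! l))"
    "snd (ssm_algorithm m n c) \<le> 8 * (m + n)"
proof -
  obtain ct cb where c: "c = (ct, cb)" by fastforce
  have lct: "length ct = m" and lcb: "length cb = n" and ctn: "\<forall>x\<in>set ct. x < n"
    and cbm: "\<forall>x\<in>set cb. x \<le> m"
    using st unfolding stable_config_def config_of_def c
    by (auto simp: in_set_conv_nth less_Suc_eq_le)
  obtain sb t1 where e1: "counting_sort m cb = (sb, t1)" by fastforce
  obtain kp t2 where e2: "counting n ct = (kp, t2)" by fastforce
  obtain ks t3 where e3: "prefix_sums 0 kp = (ks, t3)" by fastforce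
  obtain res t4 where e4: "check_loop 0 0 ks sb = (res, t4)" by fastforce
  have alg: "ssm_algorithm m n c = (res, t1 + t2 + t3 + t4)"
    using e1 e2 e3 e4 by (simp add: ssm_algorithm_def c)
  have sbm: "mset sb = mset cb" and t1: "t1 = 2 * (m + 1) + 2 * n"
    using counting_sort_props[OF cbm] e1 lcb by auto
  have lsb: "length sb = n" using sbm lcb by (metis size_mset)
  have lkp: "length kp = n" and kpn: "\<And>l. l < n \<Longrightarrow> kp ! l = count_list ct l"
    and t2: "t2 = n + m"
    using counting_props[OF ctn] e2 lct by auto
  have lks: "length ks = n" and t3: "t3 = n" and ksn: "\<And>l. l < n \<Longrightarrow> ks ! l = (\<Sum>i\<le>l. kp ! i)"
    using prefix_sums_props[of 0 kp] e3 lkp by auto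
  have cl: "res \<longleftrightarrow> (\<forall>j<n. (\<Sum>l\<le>j. ks ! l) \<le> (\<Sum>l\<le>j. sb ! l))" and t4: "t4 \<le> n + 1"
    using check_loop_props[of ks sb 0 0] e4 lks lsb by auto
  have ks_sum: "(\<Sum>l\<le>j. ks ! l) = (\<Sum>i<m. Suc j - ct ! i)" if "j < n" for j
  proof -
    have "(\<Sum>l\<le>j. ks ! l) = (\<Sum>l\<le>j. \<Sum>v\<le>l. count_list ct v)"
      using that by (intro sum.cong) (auto simp: ksn kpn)
    then show ?thesis using sum_sum_count[where j=j and xs=ct] lct by simp
  qed
  show "fst (ssm_algorithm m n c) \<longleftrightarrow>
           (\<forall>j<n. (\<Sum>i<m. Suc j - fst c ! i) \<le> (\<Sum>l\<le>j. fst (counting_sort m (snd c)) ! l))"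
    using alg cl ks_sum e1 c by auto
  show "snd (ssm_algorithm m n c) \<le> 8 * (m + n)"
    using alg t1 t2 t3 t4 n1 by simp
qed

definition condC :: "nat \<Rightarrow> nat \<Rightarrow> config \<Rightarrow> bool" where
  "condC m n c \<longleftrightarrow> (\<forall>P\<subseteq>{..<m}. \<forall>Q\<subseteq>{..<n}.
      card P * card Q \<le> (\<Sum>i\<in>P. fst c ! i) + (\<Sum>j\<in>Q. snd c ! j))"

lemma minsum:
  fixes xs :: "nat list"
  assumes "sorted xs" "K \<subseteq> {..<length xs}" "card K = J"
  shows "(\<Sum>l<J. xs ! l) \<le> (\<Sum>k\<in>K. xs ! k)"
proof (cases "J = 0")
  case True then show ?thesis by simp
next
  case False
  let ?A = "{..<J}"
  have fK: "finite K" using assms(2) finite_subset by blast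
  have JL: "J \<le> length xs" using assms(2,3) by (metis card_lessThan card_mono finite_lessThan)
  define x where "x = xs ! (J - 1)"
  have c1: "card K = card (K \<inter> ?A) + card (K - ?A)"
    using fK by (metis card_Int_Diff)
  have c2: "card ?A = card (K \<inter> ?A) + card (?A - K)"
    by (metis Int_commute card_Int_Diff finite_lessThan)
  have cc: "card (K - ?A) = card (?A - K)" using c1 c2 assms(3) by simp
  have s1: "(\<Sum>k\<in>K. xs ! k) = (\<Sum>k\<in>K \<inter> ?A. xs ! k) + (\<Sum>k\<in>K - ?A. xs ! k)"
    using fK by (metis sum.Int_Diff)
  have s2: "(\<Sum>l<J. xs ! l) = (\<Sum>k\<in>K \<inter> ?A. xs ! k) + (\<Sum>k\<in>?A - K. xs ! k)"
    by (metis Int_commute finite_lessThan sum.Int_Diff)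
  have b1: "(\<Sum>k\<in>?A - K. xs ! k) \<le> card (?A - K) * x"
  proof -
    have "(\<Sum>k\<in>?A - K. xs ! k) \<le> (\<Sum>k\<in>?A - K. x)"
      unfolding x_def using assms(1) JL False
      by (intro sum_mono) (auto intro!: sorted_nth_mono)
    then show ?thesis by simp
  qed
  have b2: "card (K - ?A) * x \<le> (\<Sum>k\<in>K - ?A. xs ! k)"
  proof -
    have "(\<Sum>k\<in>K - ?A. x) \<le> (\<Sum>k\<in>K - ?A. xs ! k)"
      unfolding x_def using assms(1,2) False
      by (intro sum_mono) (auto intro!: sorted_nth_mono)
    then show ?thesis by simp
  qed
  show ?thesis using s1 s2 b1 b2 cc by simp
qed

lemma sum_trunc:
  fixes ct :: "nat list"
  assumes "length ct = m"
  shows "(\<Sum>i<m. J - ct ! i) = (\<Sum>i\<in>{i. i < m \<and> ct ! i < J}. J - ct ! i)"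
  by (rule sum.mono_neutral_right) auto

lemma sum_trunc2:
  fixes ct :: "nat list"
  shows "(\<Sum>i\<in>{i. i < m \<and> ct ! i < J}. J - ct ! i) + (\<Sum>i\<in>{i. i < m \<and> ct ! i < J}. ct ! i)
     = card {i. i < m \<and> ct ! i < J} * J"
  by (simp flip: sum.distrib)

lemma PC_iff_cond:
  assumes st: "stable_config m n c"
    and so: "sorted sb" and ms: "mset sb = mset (snd c)"
  shows "(\<forall>j<n. (\<Sum>i<m. Suc j - fst c ! i) \<le> (\<Sum>l\<le>j. sb ! l)) \<longleftrightarrow> condC m n c"
proof -
  obtain ct cb where c: "c = (ct, cb)" by fastforce
  have lct: "length ct = m" and lcb: "length cb = n"
    using st unfolding stable_config_def config_of_def c by auto
  have lsb: "length sb = n" using ms lcb c by (metis size_mset snd_conv)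
  obtain g where g: "bij_betw g {..<n} {..<n}" "\<forall>l<n. sb ! l = cb ! g l"
    using permutation_Ex_bij[of sb cb] ms lsb lcb c by auto
  obtain f where f: "bij_betw f {..<n} {..<n}" "\<forall>l<n. cb ! l = sb ! f l"
    using permutation_Ex_bij[of cb sb] ms lsb lcb c by auto
  show ?thesis
  proof
    assume pc: "\<forall>j<n. (\<Sum>i<m. Suc j - fst c ! i) \<le> (\<Sum>l\<le>j. sb ! l)"
    show "condC m n c" unfolding condC_def c fst_conv snd_conv
    proof (intro allI impI)
      fix P Q assume P: "P \<subseteq> {..<m}" and Q: "Q \<subseteq> {..<n}"
      define J where "J = card Q"
      show "card P * card Q \<le> sum ((!) ct) P + sum ((!) cb) Q"
      proof (cases "J = 0")
        case True then show ?thesis by (simp add: J_def)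
      next
        case False
        have fQ: "finite Q" using Q finite_subset by blast
        have Jn: "J \<le> n" using Q unfolding J_def by (metis card_lessThan card_mono finite_lessThan)
        have "(\<Sum>i<m. J - ct ! i) \<le> (\<Sum>l\<le>J - 1. sb ! l)"
          using pc[rule_format, of "J - 1"] False Jn c by simp
        also have "(\<Sum>l\<le>J - 1. sb ! l) = (\<Sum>l<J. sb ! l)"
          using False by (metis Suc_pred' bot_nat_0.not_eq_extremum lessThan_Suc_atMost)
        also have "\<dots> \<le> (\<Sum>k\<in>f ` Q. sb ! k)"
        proof (rule minsum[OF so])
          show "f ` Q \<subseteq> {..<length sb}" using f(1) Q lsb by (auto dest: bij_betwE)
          show "card (f ` Q) = J" unfolding J_def
            using f(1) Q by (metis bij_betw_def card_image inj_on_subset)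
        qed
        also have "\<dots> = (\<Sum>j\<in>Q. cb ! j)"
        proof -
          have "inj_on f Q" using f(1) Q by (metis bij_betw_def inj_on_subset)
          then have "(\<Sum>k\<in>f ` Q. sb ! k) = (\<Sum>j\<in>Q. sb ! f j)" by (simp add: sum.reindex)
          also have "\<dots> = (\<Sum>j\<in>Q. cb ! j)" using f(2) Q by (intro sum.cong) auto
          finally show ?thesis .
        qed
        finally have A: "(\<Sum>i<m. J - ct ! i) \<le> (\<Sum>j\<in>Q. cb ! j)" .
        have "card P * J = (\<Sum>i\<in>P. J)" by simp
        also have "\<dots> \<le> (\<Sum>i\<in>P. ct ! i + (J - ct ! i))" by (intro sum_mono) simp
        also have "\<dots> = (\<Sum>i\<in>P. ct ! i) + (\<Sum>i\<in>P. J - ct ! i)" by (simp add: sum.distrib)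
        also have "(\<Sum>i\<in>P. J - ct ! i) \<le> (\<Sum>i<m. J - ct ! i)"
          using P by (intro sum_mono2) auto
        finally show ?thesis using A J_def by simp
      qed
    qed
  next
    assume cd: "condC m n c"
    show "\<forall>j<n. (\<Sum>i<m. Suc j - fst c ! i) \<le> (\<Sum>l\<le>j. sb ! l)"
    proof (intro allI impI)
      fix j assume j: "j < n"
      define J where "J = Suc j"
      define P where "P = {i. i < m \<and> ct ! i < J}"
      define Q where "Q = g ` {..<J}"
      have Q: "Q \<subseteq> {..<n}" using g(1) j unfolding Q_def J_def by (auto dest: bij_betwE)
      have cQ: "card Q = J" unfolding Q_def using g(1) j J_def
        by (metis bij_betw_def card_image card_lessThan inj_on_subset lessThan_subset_iff Suc_leI)
      have sQ: "(\<Sum>k\<in>Q. cb ! k) = (\<Sum>l<J. sb ! l)"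
      proof -
        have "inj_on g {..<J}" using g(1) j J_def
          by (metis bij_betw_def inj_on_subset lessThan_subset_iff Suc_leI)
        then have "(\<Sum>k\<in>Q. cb ! k) = (\<Sum>l<J. cb ! g l)" unfolding Q_def by (simp add: sum.reindex)
        also have "\<dots> = (\<Sum>l<J. sb ! l)" using g(2) j J_def by (intro sum.cong) auto
        finally show ?thesis .
      qed
      have P: "P \<subseteq> {..<m}" unfolding P_def by auto
      have "card P * card Q \<le> (\<Sum>i\<in>P. ct ! i) + (\<Sum>k\<in>Q. cb ! k)"
        using cd P Q unfolding condC_def c by auto
      then have "card P * J \<le> (\<Sum>i\<in>P. ct ! i) + (\<Sum>l<J. sb ! l)" using cQ sQ by simp
      moreover have "(\<Sum>i<m. J - ct ! i) + (\<Sum>i\<in>P. ct ! i) = card P * J"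
        using sum_trunc[OF lct, of J] sum_trunc2[of J ct m] unfolding P_def by simp
      ultimately have "(\<Sum>i<m. J - ct ! i) \<le> (\<Sum>l<J. sb ! l)" by simp
      then show "(\<Sum>i<m. Suc j - fst c ! i) \<le> (\<Sum>l\<le>j. sb ! l)"
        using c J_def by (simp add: lessThan_Suc_atMost)
    qed
  qed
qed

lemma exists_top:
  fixes a :: "nat \<Rightarrow> nat"
  assumes "finite I"
  shows "r \<le> card I \<Longrightarrow> \<exists>T\<subseteq>I. card T = r \<and> (\<forall>x\<in>T. \<forall>y\<in>I-T. a y \<le> a x)"
proof (induction r)
  case 0 then show ?case by auto
next
  case (Suc r)
  then obtain T where T: "T \<subseteq> I" "card T = r" "\<forall>x\<in>T. \<forall>y\<in>I-T. a y \<le> a x" by auto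
  have fT0: "finite T" using T(1) assms finite_subset by blast
  have "I - T \<noteq> {}"
  proof
    assume "I - T = {}"
    then have "I \<subseteq> T" by blast
    then have "card I \<le> card T" using fT0 card_mono by blast
    then show False using T(2) Suc.prems by simp
  qed
  then have ne: "a ` (I - T) \<noteq> {}" and fin: "finite (a ` (I - T))" using assms by auto
  obtain x where x: "x \<in> I - T" "a x = Max (a ` (I - T))"
    using Max_in[OF fin ne] by auto
  have xm: "\<forall>y\<in>I-T. a y \<le> a x" using x fin by auto
  have fT: "finite T" using T(1) assms finite_subset by blast
  show ?case
  proof (intro exI[of _ "insert x T"] conjI)
    show "insert x T \<subseteq> I" using x T by auto
    show "card (insert x T) = Suc r" using x T fT by simp
    show "\<forall>xa\<in>insert x T. \<forall>y\<in>I - insert x T. a y \<le> a xa" using xm T(3) by auto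
  qed
qed

lemma key:
  fixes a cb :: "nat \<Rightarrow> nat"
  assumes fQ: "finite Q" and jQ: "j \<notin> Q" and cbj: "cb j \<le> m"
    and T: "T \<subseteq> {..<m}" "card T = m - cb j" "\<forall>x\<in>T. \<forall>y\<in>{..<m}-T. a y \<le> a x"
    and C1: "\<forall>P\<subseteq>{..<m}. card P * card (insert j Q) \<le> sum a P + sum cb (insert j Q)"
    and C0: "\<forall>P\<subseteq>{..<m}. card P * card Q \<le> sum a P + sum cb Q"
  shows "P \<subseteq> {..<m} \<Longrightarrow> card P * card Q + card (P \<inter> T) \<le> sum a P + sum cb Q"
proof (induction "card (P \<inter> T) + card ({..<m} - T - P)" arbitrary: P rule: less_induct)
  case less
  let ?q = "card Q"
  have fP: "finite P" using less.prems finite_subset by blast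
  show ?case
  proof (cases "P \<inter> T = {}")
    case True then show ?thesis using C0 less.prems by simp
  next
    case False
    then obtain t where t: "t \<in> P" "t \<in> T" by auto
    show ?thesis
    proof (cases "{..<m} - T - P = {}")
      case True
      have PT: "P - T = {..<m} - T" using True less.prems by auto
      have fT: "finite T" using T(1) finite_subset by blast
      have cPT: "card (P - T) = cb j"
        using PT T(1,2) cbj fT by (simp add: card_Diff_subset)
      have cP: "card P = card (P \<inter> T) + card (P - T)"
        using fP by (metis card_Int_Diff)
      have "card P * card (insert j Q) \<le> sum a P + sum cb (insert j Q)"
        using C1 less.prems by auto
      then have "card P * (?q + 1) \<le> sum a P + sum cb Q + cb j" using fQ jQ by simp
      then show ?thesis using cP cPT by (simp add: algebra_simps)
    next
      case False
      then obtain s where s: "s < m" "s \<notin> T" "s \<notin> P" by auto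
      show ?thesis
      proof (cases "?q + 1 \<le> a t")
        case True
        let ?P' = "P - {t}"
        have "?P' \<inter> T = (P \<inter> T) - {t}" by auto
        then have m1: "card (?P' \<inter> T) = card (P \<inter> T) - 1"
          using t fP by (simp add: card_Diff_singleton)
        have m2: "{..<m} - T - ?P' = {..<m} - T - P" using t by auto
        have "0 < card (P \<inter> T)" using t fP by (auto simp: card_gt_0_iff)
        then have pos: "card (P \<inter> T) \<ge> 1" by simp
        have "card (?P' \<inter> T) + card ({..<m} - T - ?P') < card (P \<inter> T) + card ({..<m} - T - P)"
          using m1 m2 pos by simp
        moreover have "?P' \<subseteq> {..<m}" using less.prems by auto
        ultimately have IH: "card ?P' * ?q + card (?P' \<inter> T) \<le> sum a ?P' + sum cb Q"
          by (rule less.hyps)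
        have cP': "card ?P' = card P - 1" using t fP by simp
        have sP': "sum a ?P' + a t = sum a P" using t fP by (simp add: sum.remove)
        have "0 < card P" using t fP by (auto simp: card_gt_0_iff)
        then have cPpos: "card P \<ge> 1" by simp
        have "(card P - 1) * ?q + (card (P \<inter> T) - 1) + a t \<le> sum a P + sum cb Q"
          using IH cP' m1 sP' by simp
        moreover have "(card P - 1) * ?q + ?q = card P * ?q" using cPpos
          by (cases "card P") auto
        ultimately show ?thesis using True pos by linarith
      next
        case False
        have "s \<in> {..<m} - T" using s by simp
        then have "a s \<le> a t" using T(3) t(2) by blast
        then have as: "a s \<le> ?q" using False by linarith
        let ?P' = "insert s P"
        have m1: "?P' \<inter> T = P \<inter> T" using s by auto
        have m2: "{..<m} - T - P = insert s ({..<m} - T - ?P')" using s by auto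
        have "card ({..<m} - T - ?P') < card ({..<m} - T - P)"
          unfolding m2 by (simp add: card_insert_if)
        then have "card (?P' \<inter> T) + card ({..<m} - T - ?P') < card (P \<inter> T) + card ({..<m} - T - P)"
          using m1 by simp
        moreover have "?P' \<subseteq> {..<m}" using less.prems s by auto
        ultimately have IH: "card ?P' * ?q + card (?P' \<inter> T) \<le> sum a ?P' + sum cb Q"
          by (rule less.hyps)
        then have "(card P + 1) * ?q + card (P \<inter> T) \<le> sum a P + a s + sum cb Q"
          using s fP m1 by simp
        then show ?thesis using as by (simp add: algebra_simps)
      qed
    qed
  qed
qed

lemma gale_ryser:
  fixes cb :: "nat \<Rightarrow> nat"
  assumes "finite B"
  shows "(\<forall>j\<in>B. cb j \<le> m) \<Longrightarrow>
     (\<forall>P\<subseteq>{..<m}. \<forall>Q\<subseteq>B. card P * card Q \<le> sum a P + sum cb Q) \<Longrightarrow>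
     \<exists>M. (\<forall>i<m. card {j\<in>B. M i j} \<le> a i) \<and> (\<forall>j\<in>B. m - card {i. i < m \<and> M i j} \<le> cb j)"
  using assms
proof (induction B arbitrary: a rule: finite_induct)
  case empty then show ?case by simp
next
  case (insert j B)
  have cbj: "cb j \<le> m" using insert.prems by simp
  obtain T where T: "T \<subseteq> {..<m}" "card T = m - cb j" "\<forall>x\<in>T. \<forall>y\<in>{..<m}-T. a y \<le> a x"
    using exists_top[of "{..<m}" "m - cb j" a] by auto
  have K: "card P * card Q + card (P \<inter> T) \<le> sum a P + sum cb Q" if "P \<subseteq> {..<m}" "Q \<subseteq> B" for P Q
  proof (rule key[where j=j and cb=cb and m=m and T=T and a=a and Q=Q and P=P])
    show "finite Q" using that insert.hyps(1) finite_subset by blast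
    show "j \<notin> Q" using that insert.hyps(2) by auto
    have "insert j Q \<subseteq> insert j B" using that(2) by auto
    then show "\<forall>P\<subseteq>{..<m}. card P * card (insert j Q) \<le> sum a P + sum cb (insert j Q)"
      using insert.prems(2) by blast
    show "\<forall>P\<subseteq>{..<m}. card P * card Q \<le> sum a P + sum cb Q"
      using insert.prems(2) that by auto
    show "P \<subseteq> {..<m}" by fact
  qed (use cbj T in auto)
  define a' where "a' i = a i - (if i \<in> T then 1 else 0)" for i
  have aT: "1 \<le> a i" if "i \<in> T" for i
    using K[of "{i}" "{}"] that T(1) by auto
  have sa': "sum a' P + card (P \<inter> T) = sum a P" if "P \<subseteq> {..<m}" for P
  proof -
    have fP: "finite P" using that finite_subset by blast
    have "sum a' P + card (P \<inter> T) = (\<Sum>i\<in>P. a' i + (if i \<in> T then 1 else 0))"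
      using fP by (simp add: sum.distrib sum.If_cases Int_def)
    also have "\<dots> = sum a P" using aT unfolding a'_def by (intro sum.cong) auto
    finally show ?thesis .
  qed
  have C': "\<forall>P\<subseteq>{..<m}. \<forall>Q\<subseteq>B. card P * card Q \<le> sum a' P + sum cb Q"
  proof (intro allI impI)
    fix P Q assume PQ: "P \<subseteq> {..<m}" "Q \<subseteq> B"
    show "card P * card Q \<le> sum a' P + sum cb Q" using K[OF PQ] sa'[OF PQ(1)] by linarith
  qed
  obtain M' where M': "\<forall>i<m. card {l\<in>B. M' i l} \<le> a' i"
    "\<forall>l\<in>B. m - card {i. i < m \<and> M' i l} \<le> cb l"
    using insert.IH[of a'] insert.prems C' by auto
  define M where "M i l = (if l = j then i \<in> T else M' i l)" for i l
  show ?case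
  proof (intro exI[of _ M] conjI allI impI ballI)
    fix i assume i: "i < m"
    have "{l \<in> insert j B. M i l} = (if i \<in> T then insert j {l\<in>B. M' i l} else {l\<in>B. M' i l})"
      using insert.hyps(2) unfolding M_def by auto
    then have "card {l \<in> insert j B. M i l} = card {l\<in>B. M' i l} + (if i \<in> T then 1 else 0)"
      using insert.hyps by auto
    then show "card {l \<in> insert j B. M i l} \<le> a i" using M'(1) i aT unfolding a'_def
      by (cases "i \<in> T") fastforce+
  next
    fix l assume l: "l \<in> insert j B"
    show "m - card {i. i < m \<and> M i l} \<le> cb l"
    proof (cases "l = j")
      case True
      have "{i. i < m \<and> M i l} = T" using True T(1) unfolding M_def by auto
      then show ?thesis using T(2) cbj True by auto
    next
      case False
      then have "{i. i < m \<and> M i l} = {i. i < m \<and> M' i l}" unfolding M_def by auto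
      then show ?thesis using M'(2) l False by auto
    qed
  qed
qed

definition cfg :: "nat \<Rightarrow> nat \<Rightarrow> (nat \<Rightarrow> nat) \<Rightarrow> (nat \<Rightarrow> nat) \<Rightarrow> config" where
  "cfg m n f g = (map f [0..<m], map g [0..<n])"

lemma cfg_cong: "(\<And>i. i < m \<Longrightarrow> f i = f' i) \<Longrightarrow> (\<And>j. j < n \<Longrightarrow> g j = g' j) \<Longrightarrow>
   cfg m n f g = cfg m n f' g'"
  unfolding cfg_def by auto

lemma cfg_simps[simp]:
  "i < m \<Longrightarrow> fst (cfg m n f g) ! i = f i"
  "j < n \<Longrightarrow> snd (cfg m n f g) ! j = g j"
  "length (fst (cfg m n f g)) = m"
  "length (snd (cfg m n f g)) = n"
  unfolding cfg_def by auto

lemma config_of_cfg[simp]: "config_of m n (cfg m n f g)"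
  unfolding config_of_def by simp

lemma cfg_of: "config_of m n c \<Longrightarrow> c = cfg m n (\<lambda>i. fst c ! i) (\<lambda>j. snd c ! j)"
  unfolding config_of_def cfg_def by (cases c) (auto intro: nth_equalityI)

lemma pos_prob: "0 < p \<Longrightarrow> p < 1 \<Longrightarrow> 0 < p ^ a * (1 - p) ^ b" for p :: real
  by simp

lemma topple_top_cfg:
  assumes p: "0 < p" "p < 1" and i: "i < m" "n \<le> f i" and S: "S \<subseteq> {..<n}"
  shows "topple p m n (cfg m n f g)
           (cfg m n (f(i := f i - card S)) (\<lambda>j. if j \<in> S then g j + 1 else g j))"
  unfolding topple_def topple_top_def
proof (intro disjI1 conjI exI[of _ i] exI[of _ S])
  show "config_of m n (cfg m n f g)" by simp
  show "i < m" by fact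
  show "n \<le> fst (cfg m n f g) ! i" using i by simp
  show "S \<subseteq> {..<n}" by fact
  show "0 < p ^ card S * (1 - p) ^ (n - card S)" using p by simp
  show "cfg m n (f(i := f i - card S)) (\<lambda>j. if j \<in> S then g j + 1 else g j) =
    (map (\<lambda>k. if k = i then fst (cfg m n f g) ! k - card S else fst (cfg m n f g) ! k) [0..<m],
     map (\<lambda>j. if j \<in> S then snd (cfg m n f g) ! j + 1 else snd (cfg m n f g) ! j) [0..<n])"
    unfolding cfg_def by auto
qed

lemma topple_bot_cfg:
  assumes p: "0 < p" "p < 1" and j: "j < n" "m + 1 \<le> g j" and S: "S \<subseteq> {..<m}"
  shows "topple p m n (cfg m n f g)
           (cfg m n (\<lambda>k. if k \<in> S then f k + 1 else f k)
              (g(j := g j - (card S + (if s then 1 else 0)))))"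
  unfolding topple_def topple_bot_def Let_def
proof (intro disjI2 conjI exI[of _ j] exI[of _ S] exI[of _ s])
  show "config_of m n (cfg m n f g)" by simp
  show "j < n" by fact
  show "m + 1 \<le> snd (cfg m n f g) ! j" using j by simp
  show "S \<subseteq> {..<m}" by fact
  show "0 < p ^ (card S + (if s then 1 else 0)) * (1 - p) ^ (m + 1 - (card S + (if s then 1 else 0)))"
    using p by simp
  show "cfg m n (\<lambda>k. if k \<in> S then f k + 1 else f k) (g(j := g j - (card S + (if s then 1 else 0)))) =
    (map (\<lambda>k. if k \<in> S then fst (cfg m n f g) ! k + 1 else fst (cfg m n f g) ! k) [0..<m],
     map (\<lambda>l. if l = j then snd (cfg m n f g) ! l - (card S + (if s then 1 else 0))
              else snd (cfg m n f g) ! l) [0..<n])"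
    unfolding cfg_def by auto
qed

lemma sum_ind: "finite Q \<Longrightarrow> (\<Sum>j\<in>Q. if j \<in> S then g j + 1 else g j) = sum g Q + card (Q \<inter> S)"
  for g :: "nat \<Rightarrow> nat"
proof -
  assume fQ: "finite Q"
  have "(\<Sum>j\<in>Q. if j \<in> S then g j + 1 else g j) = (\<Sum>j\<in>Q. g j + (if j \<in> S then 1 else 0))"
    by (intro sum.cong) auto
  also have "\<dots> = sum g Q + card (Q \<inter> S)"
    using fQ by (simp add: sum.distrib sum.If_cases Int_def)
  finally show ?thesis .
qed

lemma topple_cond:
  assumes t: "topple p m n c c'" and cd: "condC m n c"
  shows "condC m n c'"
  using t unfolding topple_def
proof
  assume "topple_top p m n c c'"
  then obtain i S where co: "config_of m n c" and i: "i < m" "n \<le> fst c ! i" and S: "S \<subseteq> {..<n}"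
    and c': "c' = (map (\<lambda>k. if k = i then fst c ! k - card S else fst c ! k) [0..<m],
              map (\<lambda>j. if j \<in> S then snd c ! j + 1 else snd c ! j) [0..<n])"
    unfolding topple_top_def by blast
  show "condC m n c'" unfolding condC_def
  proof (intro allI impI)
    fix P Q assume P: "P \<subseteq> {..<m}" and Q: "Q \<subseteq> {..<n}"
    have fP: "finite P" and fQ: "finite Q" using P Q finite_subset by auto
    have sQ: "(\<Sum>j\<in>Q. snd c' ! j) = (\<Sum>j\<in>Q. snd c ! j) + card (Q \<inter> S)"
    proof -
      have "(\<Sum>j\<in>Q. snd c' ! j) = (\<Sum>j\<in>Q. if j \<in> S then snd c ! j + 1 else snd c ! j)"
        using Q c' by (intro sum.cong) auto
      then show ?thesis using sum_ind[OF fQ] by simp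
    qed
    show "card P * card Q \<le> (\<Sum>i\<in>P. fst c' ! i) + (\<Sum>j\<in>Q. snd c' ! j)"
    proof (cases "i \<in> P")
      case False
      have "(\<Sum>k\<in>P. fst c' ! k) = (\<Sum>k\<in>P. fst c ! k)"
        using P c' False by (intro sum.cong) auto
      moreover have "card P * card Q \<le> (\<Sum>k\<in>P. fst c ! k) + (\<Sum>j\<in>Q. snd c ! j)"
        using cd P Q unfolding condC_def by blast
      ultimately show ?thesis using sQ by linarith
    next
      case True
      have sP: "(\<Sum>k\<in>P. fst c' ! k) = (\<Sum>k\<in>P - {i}. fst c ! k) + (fst c ! i - card S)"
      proof -
        have "(\<Sum>k\<in>P. fst c' ! k) = (\<Sum>k\<in>P - {i}. fst c' ! k) + fst c' ! i"
          using True fP by (simp add: sum.remove)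
        moreover have "(\<Sum>k\<in>P - {i}. fst c' ! k) = (\<Sum>k\<in>P - {i}. fst c ! k)"
          using P c' by (intro sum.cong) auto
        ultimately show ?thesis using c' i by simp
      qed
      have C0: "card (P - {i}) * card Q \<le> (\<Sum>k\<in>P - {i}. fst c ! k) + (\<Sum>j\<in>Q. snd c ! j)"
        using cd P Q unfolding condC_def by (meson Diff_subset order_trans)
      have cP: "card (P - {i}) + 1 = card P" using card.remove[OF fP True] by simp
      have cS: "card S = card (Q \<inter> S) + card (S - Q)"
        using card_Int_Diff[of S Q] finite_subset[OF S] by (simp add: Int_commute)
      have "card (S - Q) + card Q \<le> n"
      proof -
        have "S - Q \<subseteq> {..<n} - Q" using S by auto
        then have "card (S - Q) \<le> card ({..<n} - Q)" by (intro card_mono) auto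
        also have "\<dots> = n - card Q" using Q fQ by (simp add: card_Diff_subset)
        moreover have "card Q \<le> n" using card_mono[OF finite_lessThan Q] by simp
        ultimately show ?thesis by linarith
      qed
      then have "card Q + card S \<le> fst c ! i + card (Q \<inter> S)" using cS i by linarith
      moreover have "card S \<le> fst c ! i" using card_mono[OF finite_lessThan S] i by simp
      ultimately have "card Q \<le> (fst c ! i - card S) + card (Q \<inter> S)" by linarith
      then have "card (P - {i}) * card Q + card Q \<le> (\<Sum>k\<in>P. fst c' ! k) + (\<Sum>j\<in>Q. snd c' ! j)"
        using C0 sP sQ by linarith
      moreover have "card P * card Q = card (P - {i}) * card Q + card Q"
        using cP[symmetric] by (simp add: algebra_simps)
      ultimately show ?thesis by simp
    qed
  qed
next
  assume "topple_bot p m n c c'"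
  then obtain j S s where co: "config_of m n c" and j: "j < n" "m + 1 \<le> snd c ! j" and S: "S \<subseteq> {..<m}"
    and c': "c' = (map (\<lambda>k. if k \<in> S then fst c ! k + 1 else fst c ! k) [0..<m],
              map (\<lambda>l. if l = j then snd c ! l - (card S + (if s then 1 else 0)) else snd c ! l) [0..<n])"
    unfolding topple_bot_def Let_def by blast
  define tot where "tot = card S + (if s then 1 else 0)"
  show "condC m n c'" unfolding condC_def
  proof (intro allI impI)
    fix P Q assume P: "P \<subseteq> {..<m}" and Q: "Q \<subseteq> {..<n}"
    have fP: "finite P" and fQ: "finite Q" using P Q finite_subset by auto
    have sP: "(\<Sum>k\<in>P. fst c' ! k) = (\<Sum>k\<in>P. fst c ! k) + card (P \<inter> S)"
    proof -
      have "(\<Sum>k\<in>P. fst c' ! k) = (\<Sum>k\<in>P. if k \<in> S then fst c ! k + 1 else fst c ! k)"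
        using P c' by (intro sum.cong) auto
      then show ?thesis using sum_ind[OF fP] by simp
    qed
    show "card P * card Q \<le> (\<Sum>i\<in>P. fst c' ! i) + (\<Sum>j\<in>Q. snd c' ! j)"
    proof (cases "j \<in> Q")
      case False
      have "(\<Sum>k\<in>Q. snd c' ! k) = (\<Sum>k\<in>Q. snd c ! k)"
        using Q c' False by (intro sum.cong) auto
      moreover have "card P * card Q \<le> (\<Sum>k\<in>P. fst c ! k) + (\<Sum>j\<in>Q. snd c ! j)"
        using cd P Q unfolding condC_def by blast
      ultimately show ?thesis using sP by linarith
    next
      case True
      have sQ: "(\<Sum>k\<in>Q. snd c' ! k) = (\<Sum>k\<in>Q - {j}. snd c ! k) + (snd c ! j - tot)"
      proof -
        have "(\<Sum>k\<in>Q. snd c' ! k) = (\<Sum>k\<in>Q - {j}. snd c' ! k) + snd c' ! j"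
          using True fQ by (simp add: sum.remove)
        moreover have "(\<Sum>k\<in>Q - {j}. snd c' ! k) = (\<Sum>k\<in>Q - {j}. snd c ! k)"
          using Q c' by (intro sum.cong) auto
        ultimately show ?thesis using c' j unfolding tot_def by simp
      qed
      have C0: "card P * card (Q - {j}) \<le> (\<Sum>k\<in>P. fst c ! k) + (\<Sum>l\<in>Q - {j}. snd c ! l)"
        using cd P Q unfolding condC_def by (meson Diff_subset order_trans)
      have cQ: "card (Q - {j}) + 1 = card Q" using card.remove[OF fQ True] by simp
      have cS: "card S = card (P \<inter> S) + card (S - P)"
        using card_Int_Diff[of S P] finite_subset[OF S] by (simp add: Int_commute)
      have "card (S - P) + card P \<le> m"
      proof -
        have "S - P \<subseteq> {..<m} - P" using S by auto
        then have "card (S - P) \<le> card ({..<m} - P)" by (intro card_mono) auto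
        also have "\<dots> = m - card P" using P fP by (simp add: card_Diff_subset)
        moreover have "card P \<le> m" using card_mono[OF finite_lessThan P] by simp
        ultimately show ?thesis by linarith
      qed
      then have "card P \<le> (snd c ! j - tot) + card (P \<inter> S)" using cS j unfolding tot_def by auto
      then have "card P * card (Q - {j}) + card P \<le> (\<Sum>k\<in>P. fst c' ! k) + (\<Sum>l\<in>Q. snd c' ! l)"
        using C0 sP sQ by linarith
      moreover have "card P * card Q = card P * card (Q - {j}) + card P"
        using cQ[symmetric] by (simp add: algebra_simps)
      ultimately show ?thesis by simp
    qed
  qed
qed

lemma topples_cond: "(topple p m n)\<^sup>*\<^sup>* c c' \<Longrightarrow> condC m n c \<Longrightarrow> condC m n c'"
  by (induction rule: rtranclp_induct) (auto intro: topple_cond)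

lemma cond_mono:
  assumes "condC m n c" "\<forall>i<m. fst c ! i \<le> fst d ! i" "\<forall>j<n. snd c ! j \<le> snd d ! j"
  shows "condC m n d"
  unfolding condC_def
proof (intro allI impI)
  fix P Q assume P: "P \<subseteq> {..<m}" and Q: "Q \<subseteq> {..<n}"
  have "(\<Sum>i\<in>P. fst c ! i) \<le> (\<Sum>i\<in>P. fst d ! i)" using P assms(2) by (intro sum_mono) auto
  moreover have "(\<Sum>i\<in>Q. snd c ! i) \<le> (\<Sum>i\<in>Q. snd d ! i)" using Q assms(3) by (intro sum_mono) auto
  moreover have "card P * card Q \<le> (\<Sum>k\<in>P. fst c ! k) + (\<Sum>j\<in>Q. snd c ! j)"
    using assms(1) P Q unfolding condC_def by blast
  ultimately show "card P * card Q \<le> (\<Sum>i\<in>P. fst d ! i) + (\<Sum>j\<in>Q. snd d ! j)"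
    by linarith
qed

lemma upd_ge: "xs ! j \<le> xs[k := Suc (xs ! k)] ! j" for xs :: "nat list"
  by (cases "k = j"; cases "k < length xs") (auto simp: nth_list_update_neq list_update_beyond)

lemma add_grain_ge:
  assumes "config_of m n c"
  shows "\<forall>i<m. fst c ! i \<le> fst (add_grain m n v c) ! i" "\<forall>j<n. snd c ! j \<le> snd (add_grain m n v c) ! j"
  using assms unfolding add_grain_def config_of_def by (auto simp: upd_ge)

lemma chain_cond:
  assumes "chain_step p m n c c'" "condC m n c" shows "condC m n c'"
proof -
  obtain v where st: "stable_config m n c" and t: "(topple p m n)\<^sup>*\<^sup>* (add_grain m n v c) c'"
    using assms(1) unfolding chain_step_def stabilises_to_def by blast
  have co: "config_of m n c" using st unfolding stable_config_def by simp
  have "condC m n (add_grain m n v c)"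
    using cond_mono[OF assms(2) add_grain_ge[OF co]] by blast
  then show ?thesis using topples_cond[OF t] by blast
qed

lemma chains_cond: "(chain_step p m n)\<^sup>*\<^sup>* c c' \<Longrightarrow> condC m n c \<Longrightarrow> condC m n c'"
  by (induction rule: rtranclp_induct) (auto intro: chain_cond)

lemma chains_stable: "(chain_step p m n)\<^sup>*\<^sup>* c c' \<Longrightarrow> stable_config m n c \<Longrightarrow> stable_config m n c'"
  by (induction rule: rtranclp_induct) (auto simp: chain_step_def stabilises_to_def)

definition le_cfg :: "nat \<Rightarrow> nat \<Rightarrow> config \<Rightarrow> config \<Rightarrow> bool" where
  "le_cfg m n d e \<longleftrightarrow> (\<forall>i<m. fst d ! i \<le> fst e ! i) \<and> (\<forall>j<n. snd d ! j \<le> snd e ! j)"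

definition dst :: "nat \<Rightarrow> nat \<Rightarrow> config \<Rightarrow> config \<Rightarrow> nat" where
  "dst m n d e = (\<Sum>i<m. fst e ! i - fst d ! i) + (\<Sum>j<n. snd e ! j - snd d ! j)"

lemma sum_dec:
  fixes f g :: "nat \<Rightarrow> nat"
  assumes "i < m" "\<forall>k<m. g k \<le> f k" "g i < f i"
  shows "(\<Sum>k<m. f k - (g(i := g i + 1)) k) + 1 = (\<Sum>k<m. f k - g k)"
proof -
  have "(\<Sum>k<m. f k - g k) = (\<Sum>k<m. (f k - (g(i := g i + 1)) k) + (if k = i then 1 else 0))"
    using assms by (intro sum.cong) auto
  also have "\<dots> = (\<Sum>k<m. f k - (g(i := g i + 1)) k) + 1"
    using assms(1) by (simp add: sum.distrib)
  finally show ?thesis by simp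
qed

lemma chain_add:
  assumes st: "stable_config m n d" and v: "v < m + n"
    and st': "stable_config m n (add_grain m n v d)"
  shows "chain_step p m n d (add_grain m n v d)"
  unfolding chain_step_def stabilises_to_def using st v st' by blast

lemma upward_k:
  assumes ste: "stable_config m n e"
  shows "\<forall>d. stable_config m n d \<and> le_cfg m n d e \<and> dst m n d e = k \<longrightarrow> (chain_step p m n)\<^sup>*\<^sup>* d e"
proof (induction k)
  case 0
  show ?case
  proof (intro allI impI)
    fix d assume H: "stable_config m n d \<and> le_cfg m n d e \<and> dst m n d e = 0"
    have ld: "length (fst d) = m" "length (snd d) = n" and le: "length (fst e) = m" "length (snd e) = n"
      using H ste unfolding stable_config_def config_of_def by auto
    have "fst d = fst e"
      using H ld le unfolding dst_def le_cfg_def by (intro nth_equalityI) (auto intro!: le_antisym)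
    moreover have "snd d = snd e"
      using H ld le unfolding dst_def le_cfg_def by (intro nth_equalityI) (auto intro!: le_antisym)
    ultimately have "d = e" by (simp add: prod_eq_iff)
    then show "(chain_step p m n)\<^sup>*\<^sup>* d e" by simp
  qed
next
  case (Suc k)
  show ?case
  proof (intro allI impI)
    fix d assume H: "stable_config m n d \<and> le_cfg m n d e \<and> dst m n d e = Suc k"
    have std: "stable_config m n d" and led: "le_cfg m n d e" and dd: "dst m n d e = Suc k" using H by auto
    have ld: "length (fst d) = m" "length (snd d) = n" and le: "length (fst e) = m" "length (snd e) = n"
      using std ste unfolding stable_config_def config_of_def by auto
    have ste': "\<forall>i<m. fst e ! i < n" "\<forall>j<n. snd e ! j < m + 1" using ste unfolding stable_config_def by auto
    have "(\<exists>i<m. fst d ! i < fst e ! i) \<or> (\<exists>j<n. snd d ! j < snd e ! j)"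
    proof (rule ccontr)
      assume "\<not> ?thesis"
      then have "dst m n d e = 0" unfolding dst_def by auto
      then show False using dd by simp
    qed
    then show "(chain_step p m n)\<^sup>*\<^sup>* d e"
    proof
      assume "\<exists>i<m. fst d ! i < fst e ! i"
      then obtain i where i: "i < m" "fst d ! i < fst e ! i" by auto
      define d' where "d' = add_grain m n i d"
      have d': "d' = ((fst d)[i := fst d ! i + 1], snd d)" unfolding d'_def add_grain_def using i by simp
      have fd': "fst d' ! k = ((\<lambda>k. fst d ! k)(i := fst d ! i + 1)) k" if "k < m" for k
        using that ld d' by (simp add: nth_list_update)
      have std': "stable_config m n d'"
        using std ste' i fd' ld unfolding stable_config_def config_of_def d'
        by (auto simp: nth_list_update)
      have led': "le_cfg m n d' e" using led i fd' unfolding le_cfg_def d' by (auto simp: nth_list_update)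
      have "dst m n d' e + 1 = dst m n d e"
      proof -
        have "(\<Sum>k<m. fst e ! k - fst d' ! k) = (\<Sum>k<m. fst e ! k - ((\<lambda>k. fst d ! k)(i := fst d ! i + 1)) k)"
          using fd' by (intro sum.cong) auto
        moreover have "(\<Sum>k<m. fst e ! k - ((\<lambda>k. fst d ! k)(i := fst d ! i + 1)) k) + 1 = (\<Sum>k<m. fst e ! k - fst d ! k)"
        proof -
          have "\<forall>k<m. fst d ! k \<le> fst e ! k" using led unfolding le_cfg_def by simp
          from sum_dec[of i m "\<lambda>k. fst d ! k" "\<lambda>k. fst e ! k", OF i(1) this i(2)] show ?thesis by simp
        qed
        ultimately show ?thesis unfolding dst_def d' by simp
      qed
      then have "dst m n d' e = k" using dd by simp
      then have "(chain_step p m n)\<^sup>*\<^sup>* d' e" using Suc.IH std' led' by blast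
      moreover have "chain_step p m n d d'" unfolding d'_def
        using chain_add[OF std _ std'[unfolded d'_def]] i by simp
      ultimately show ?thesis by (rule converse_rtranclp_into_rtranclp[rotated])
    next
      assume "\<exists>j<n. snd d ! j < snd e ! j"
      then obtain j where j: "j < n" "snd d ! j < snd e ! j" by auto
      define d' where "d' = add_grain m n (m + j) d"
      have d': "d' = (fst d, (snd d)[j := snd d ! j + 1])" unfolding d'_def add_grain_def by simp
      have sd': "snd d' ! k = ((\<lambda>k. snd d ! k)(j := snd d ! j + 1)) k" if "k < n" for k
        using that ld d' by (simp add: nth_list_update)
      have std': "stable_config m n d'"
        using std ste' j sd' ld unfolding stable_config_def config_of_def d'
        by (auto simp: nth_list_update)
      have led': "le_cfg m n d' e" using led j sd' unfolding le_cfg_def d' by (auto simp: nth_list_update)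
      have "dst m n d' e + 1 = dst m n d e"
      proof -
        have "(\<Sum>k<n. snd e ! k - snd d' ! k) = (\<Sum>k<n. snd e ! k - ((\<lambda>k. snd d ! k)(j := snd d ! j + 1)) k)"
          using sd' by (intro sum.cong) auto
        moreover have "(\<Sum>k<n. snd e ! k - ((\<lambda>k. snd d ! k)(j := snd d ! j + 1)) k) + 1 = (\<Sum>k<n. snd e ! k - snd d ! k)"
        proof -
          have "\<forall>k<n. snd d ! k \<le> snd e ! k" using led unfolding le_cfg_def by simp
          from sum_dec[of j n "\<lambda>k. snd d ! k" "\<lambda>k. snd e ! k", OF j(1) this j(2)] show ?thesis by simp
        qed
        ultimately show ?thesis unfolding dst_def d' by simp
      qed
      then have "dst m n d' e = k" using dd by simp
      then have "(chain_step p m n)\<^sup>*\<^sup>* d' e" using Suc.IH std' led' by blast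
      moreover have "chain_step p m n d d'" unfolding d'_def
        using chain_add[OF std _ std'[unfolded d'_def]] j by simp
      ultimately show ?thesis by (rule converse_rtranclp_into_rtranclp[rotated])
    qed
  qed
qed

lemma upward:
  "stable_config m n d \<Longrightarrow> stable_config m n e \<Longrightarrow> le_cfg m n d e \<Longrightarrow> (chain_step p m n)\<^sup>*\<^sup>* d e"
  using upward_k by blast

definition cmax :: "nat \<Rightarrow> nat \<Rightarrow> config" where
  "cmax m n = cfg m n (\<lambda>_. n - 1) (\<lambda>_. m)"

definition F2 :: "(nat \<Rightarrow> nat \<Rightarrow> bool) \<Rightarrow> nat \<Rightarrow> nat \<Rightarrow> nat \<Rightarrow> nat" where
  "F2 M n k i = (if i < k then (if M i 0 then 1 else 0) else n)"
definition G2 :: "(nat \<Rightarrow> nat \<Rightarrow> bool) \<Rightarrow> nat \<Rightarrow> nat \<Rightarrow> nat \<Rightarrow> nat" where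
  "G2 M m k j = (if j = 0 then card {i. i < k \<and> \<not> M i 0} else m + k)"

lemma phase2:
  assumes p: "0 < p" "p < 1" and n1: "1 \<le> n"
  shows "k \<le> m \<Longrightarrow> (topple p m n)\<^sup>*\<^sup>* (cfg m n (\<lambda>_. n) (\<lambda>j. if j = 0 then 0 else m))
                          (cfg m n (F2 M n k) (G2 M m k))"
proof (induction k)
  case 0
  have "cfg m n (F2 M n 0) (G2 M m 0) = cfg m n (\<lambda>_. n) (\<lambda>j. if j = 0 then 0 else m)"
    by (rule cfg_cong) (auto simp: F2_def G2_def)
  then show ?case by simp
next
  case (Suc k)
  then have k: "k < m" by simp
  define S where "S = {1..<n} \<union> (if M k 0 then {} else {0})"
  have S: "S \<subseteq> {..<n}" unfolding S_def using n1 by auto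
  have cS: "card S = n - 1 + (if M k 0 then 0 else 1)"
  proof (cases "M k 0")
    case True then show ?thesis unfolding S_def by simp
  next
    case False
    then have "S = insert 0 {1..<n}" unfolding S_def by auto
    then show ?thesis using False n1 by simp
  qed
  have t: "topple p m n (cfg m n (F2 M n k) (G2 M m k))
      (cfg m n ((F2 M n k)(k := F2 M n k k - card S)) (\<lambda>j. if j \<in> S then G2 M m k j + 1 else G2 M m k j))"
    by (rule topple_top_cfg[OF p k _ S]) (simp add: F2_def)
  have "cfg m n ((F2 M n k)(k := F2 M n k k - card S)) (\<lambda>j. if j \<in> S then G2 M m k j + 1 else G2 M m k j)
      = cfg m n (F2 M n (Suc k)) (G2 M m (Suc k))"
  proof (rule cfg_cong)
    fix i assume "i < m"
    show "((F2 M n k)(k := F2 M n k k - card S)) i = F2 M n (Suc k) i"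
      using cS n1 by (auto simp: F2_def)
  next
    fix j assume j: "j < n"
    have ck: "{i. i < Suc k \<and> \<not> M i 0} = (if M k 0 then {i. i < k \<and> \<not> M i 0} else insert k {i. i < k \<and> \<not> M i 0})"
      by (auto simp: less_Suc_eq)
    show "(if j \<in> S then G2 M m k j + 1 else G2 M m k j) = G2 M m (Suc k) j"
      using j ck unfolding S_def G2_def by auto
  qed
  with t have "topple p m n (cfg m n (F2 M n k) (G2 M m k)) (cfg m n (F2 M n (Suc k)) (G2 M m (Suc k)))"
    by simp
  with Suc show ?case by (meson Suc_leD rtranclp.rtrancl_into_rtrancl)
qed

lemma sink_topples:
  assumes p: "0 < p" "p < 1" and j: "j < n"
  shows "g j = m + 1 + r \<Longrightarrow> (topple p m n)\<^sup>*\<^sup>* (cfg m n f g) (cfg m n f (g(j := m + 1)))"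
proof (induction r arbitrary: g)
  case 0
  then have "g(j := m + 1) = g" by auto
  then show ?case by simp
next
  case (Suc r)
  have t: "topple p m n (cfg m n f g)
      (cfg m n (\<lambda>k. if k \<in> {} then f k + 1 else f k) (g(j := g j - (card ({}::nat set) + (if True then 1 else 0)))))"
    by (rule topple_bot_cfg[OF p j]) (use Suc.prems in auto)
  have e: "cfg m n (\<lambda>k. if k \<in> {} then f k + 1 else f k) (g(j := g j - (card ({}::nat set) + (if True then 1 else 0))))
     = cfg m n f (g(j := g j - 1))" by simp
  have "(topple p m n)\<^sup>*\<^sup>* (cfg m n f (g(j := g j - 1))) (cfg m n f ((g(j := g j - 1))(j := m + 1)))"
    by (rule Suc.IH) (use Suc.prems in simp)
  then have "(topple p m n)\<^sup>*\<^sup>* (cfg m n f (g(j := g j - 1))) (cfg m n f (g(j := m + 1)))" by simp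
  with t e show ?case by (metis converse_rtranclp_into_rtranclp)
qed

definition F3 :: "(nat \<Rightarrow> nat \<Rightarrow> bool) \<Rightarrow> nat \<Rightarrow> nat \<Rightarrow> nat" where
  "F3 M k i = (if M i 0 then 1 else 0) + card {j. 1 \<le> j \<and> j < k \<and> M i j}"
definition G3 :: "(nat \<Rightarrow> nat \<Rightarrow> bool) \<Rightarrow> nat \<Rightarrow> nat \<Rightarrow> nat \<Rightarrow> nat" where
  "G3 M m k j = (if j = 0 then card {i. i < m \<and> \<not> M i 0} else if j < k then m - card {i. i < m \<and> M i j} else m + m)"

lemma phase3:
  assumes p: "0 < p" "p < 1" and n1: "1 \<le> n" and m1: "1 \<le> m"
  shows "1 \<le> k \<Longrightarrow> k \<le> n \<Longrightarrow> (topple p m n)\<^sup>*\<^sup>* (cfg m n (F2 M n m) (G2 M m m)) (cfg m n (F3 M k) (G3 M m k))"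
proof (induction k rule: nat_induct_at_least)
  case base
  have "cfg m n (F3 M 1) (G3 M m 1) = cfg m n (F2 M n m) (G2 M m m)"
    by (rule cfg_cong) (auto simp: F2_def G2_def F3_def G3_def)
  then show ?case by simp
next
  case (Suc k)
  then have k: "k < n" "1 \<le> k" by auto
  have s1: "(topple p m n)\<^sup>*\<^sup>* (cfg m n (F3 M k) (G3 M m k)) (cfg m n (F3 M k) ((G3 M m k)(k := m + 1)))"
    by (rule sink_topples[OF p k(1), where r = "m - 1"]) (use k m1 in \<open>auto simp: G3_def\<close>)
  define S where "S = {i. i < m \<and> M i k}"
  have S: "S \<subseteq> {..<m}" unfolding S_def by auto
  have t: "topple p m n (cfg m n (F3 M k) ((G3 M m k)(k := m + 1)))
     (cfg m n (\<lambda>i. if i \<in> S then F3 M k i + 1 else F3 M k i)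
        (((G3 M m k)(k := m + 1))(k := ((G3 M m k)(k := m + 1)) k - (card S + (if True then 1 else 0)))))"
    by (rule topple_bot_cfg[OF p k(1) _ S]) simp
  have e: "cfg m n (\<lambda>i. if i \<in> S then F3 M k i + 1 else F3 M k i)
        (((G3 M m k)(k := m + 1))(k := ((G3 M m k)(k := m + 1)) k - (card S + (if True then 1 else 0))))
     = cfg m n (F3 M (Suc k)) (G3 M m (Suc k))"
  proof (rule cfg_cong)
    fix i assume i: "i < m"
    have "{j. 1 \<le> j \<and> j < Suc k \<and> M i j} = (if M i k then insert k {j. 1 \<le> j \<and> j < k \<and> M i j} else {j. 1 \<le> j \<and> j < k \<and> M i j})"
      using k by (auto simp: less_Suc_eq)
    then show "(if i \<in> S then F3 M k i + 1 else F3 M k i) = F3 M (Suc k) i"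
      using i unfolding S_def F3_def by auto
  next
    fix j assume j: "j < n"
    show "(((G3 M m k)(k := m + 1))(k := ((G3 M m k)(k := m + 1)) k - (card S + (if True then 1 else 0)))) j
       = G3 M m (Suc k) j"
      using k unfolding G3_def S_def by auto
  qed
  have "(topple p m n)\<^sup>*\<^sup>* (cfg m n (F3 M k) (G3 M m k)) (cfg m n (F3 M (Suc k)) (G3 M m (Suc k)))"
    using s1 t e by (metis rtranclp.rtrancl_into_rtrancl)
  moreover have "(topple p m n)\<^sup>*\<^sup>* (cfg m n (F2 M n m) (G2 M m m)) (cfg m n (F3 M k) (G3 M m k))"
    using Suc.IH k by simp
  ultimately show ?case by (meson rtranclp_trans)
qed

definition inM :: "nat \<Rightarrow> nat \<Rightarrow> (nat \<Rightarrow> nat \<Rightarrow> bool) \<Rightarrow> config" where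
  "inM m n M = cfg m n (\<lambda>i. card {j. j < n \<and> M i j}) (\<lambda>j. m - card {i. i < m \<and> M i j})"

lemma avalanche_topples:
  assumes p: "0 < p" "p < 1" and n1: "1 \<le> n" and m1: "1 \<le> m"
  shows "(topple p m n)\<^sup>*\<^sup>* (add_grain m n m (cmax m n)) (inM m n M)"
proof -
  have a0: "add_grain m n m (cmax m n) = cfg m n (\<lambda>_. n - 1) ((\<lambda>_. m)(0 := m + 1))"
    unfolding add_grain_def cmax_def cfg_def using n1
    by (auto intro!: nth_equalityI simp: nth_list_update)
  define g0 where "g0 = (\<lambda>_::nat. m)(0 := m + 1)"
  define f0 where "f0 = (\<lambda>_::nat. n - 1)"
  have t0: "topple p m n (cfg m n f0 g0)
    (cfg m n (\<lambda>k. if k \<in> {..<m} then f0 k + 1 else f0 k) (g0(0 := g0 0 - (card {..<m} + (if True then 1 else 0)))))"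
    by (rule topple_bot_cfg[OF p]) (use n1 in \<open>auto simp: g0_def\<close>)
  have e0: "cfg m n (\<lambda>k. if k \<in> {..<m} then f0 k + 1 else f0 k) (g0(0 := g0 0 - (card {..<m} + (if True then 1 else 0))))
     = cfg m n (\<lambda>_. n) (\<lambda>j. if j = 0 then 0 else m)"
    by (rule cfg_cong) (use n1 in \<open>auto simp: g0_def f0_def\<close>)
  have p2: "(topple p m n)\<^sup>*\<^sup>* (cfg m n (\<lambda>_. n) (\<lambda>j. if j = 0 then 0 else m)) (cfg m n (F2 M n m) (G2 M m m))"
    using phase2[OF p n1] by simp
  have p3: "(topple p m n)\<^sup>*\<^sup>* (cfg m n (F2 M n m) (G2 M m m)) (cfg m n (F3 M n) (G3 M m n))"
    using phase3[OF p n1 m1] n1 by simp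
  have ef: "cfg m n (F3 M n) (G3 M m n) = inM m n M"
    unfolding inM_def
  proof (rule cfg_cong)
    fix i assume i: "i < m"
    let ?A = "{j. j < n \<and> M i j}"
    have "card ?A = card (?A \<inter> {0}) + card (?A - {0})"
      by (rule card_Int_Diff) simp
    moreover have "?A - {0} = {j. 1 \<le> j \<and> j < n \<and> M i j}" by auto
    moreover have "?A \<inter> {0} = (if M i 0 then {0} else {})" using n1 by auto
    ultimately show "F3 M n i = card {j. j < n \<and> M i j}" unfolding F3_def by simp
  next
    fix j assume j: "j < n"
    have "{i. i < m \<and> \<not> M i 0} = {..<m} - {i. i < m \<and> M i 0}" by auto
    moreover have "card ({..<m} - {i. i < m \<and> M i 0}) = m - card {i. i < m \<and> M i 0}"
      by (subst card_Diff_subset) auto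
    ultimately have "card {i. i < m \<and> \<not> M i 0} = m - card {i. i < m \<and> M i 0}" by simp
    then show "G3 M m n j = m - card {i. i < m \<and> M i j}" using j unfolding G3_def by auto
  qed
  show ?thesis unfolding a0 f0_def[symmetric] g0_def[symmetric]
    using t0 e0 p2 p3 ef by (metis converse_rtranclp_into_rtranclp rtranclp_trans)
qed

lemma cmax_stable: "1 \<le> n \<Longrightarrow> stable_config m n (cmax m n)"
  unfolding stable_config_def cmax_def by auto

lemma le_cmax: "stable_config m n d \<Longrightarrow> le_cfg m n d (cmax m n)"
  unfolding stable_config_def le_cfg_def cmax_def by auto

lemma cond_cmax: assumes n1: "1 \<le> n" shows "condC m n (cmax m n)"
  unfolding condC_def
proof (intro allI impI)
  fix P Q assume P: "P \<subseteq> {..<m}" and Q: "Q \<subseteq> {..<n}"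
  have sP: "(\<Sum>i\<in>P. fst (cmax m n) ! i) = card P * (n - 1)"
    using P unfolding cmax_def by (simp add: subset_eq)
  have sQ: "(\<Sum>j\<in>Q. snd (cmax m n) ! j) = card Q * m"
    using Q unfolding cmax_def by (simp add: subset_eq)
  have a: "card P \<le> m" using card_mono[OF finite_lessThan P] by simp
  have b: "card Q \<le> n" using card_mono[OF finite_lessThan Q] by simp
  have "card P * card Q \<le> card P * (n - 1) + card Q * m"
  proof (cases "card Q \<le> n - 1")
    case True
    then have "card P * card Q \<le> card P * (n - 1)" by (rule mult_le_mono2)
    then show ?thesis by (rule trans_le_add1)
  next
    case False
    then have bq: "card Q = n" using b by simp
    have "card P * n = card P * (n - 1) + card P" using n1
      by (cases n) auto
    moreover have "m \<le> n * m" using n1 by simp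
    then have "card P \<le> n * m" using a by linarith
    ultimately show ?thesis using bq by (simp add: mult.commute)
  qed
  then show "card P * card Q \<le> (\<Sum>i\<in>P. fst (cmax m n) ! i) + (\<Sum>j\<in>Q. snd (cmax m n) ! j)"
    using sP sQ by simp
qed

lemma SR_imp_cond:
  assumes n1: "1 \<le> n" and st: "stable_config m n c" and sr: "stoch_recurrent p m n c"
  shows "condC m n c"
proof -
  have "(chain_step p m n)\<^sup>*\<^sup>* c (cmax m n)"
    using upward[OF st cmax_stable[OF n1] le_cmax[OF st]] .
  then have "(chain_step p m n)\<^sup>*\<^sup>* (cmax m n) c" using sr unfolding stoch_recurrent_def by blast
  then show ?thesis using chains_cond cond_cmax[OF n1] by blast
qed

lemma cond_imp_SR:
  assumes p: "0 < p" "p < 1" and n1: "1 \<le> n" and st: "stable_config m n c" and cd: "condC m n c"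
  shows "stoch_recurrent p m n c"
proof -
  have lens: "length (fst c) = m" "length (snd c) = n" and ct: "\<forall>i<m. fst c ! i < n"
    and cb: "\<forall>j<n. snd c ! j < m + 1"
    using st unfolding stable_config_def config_of_def by auto
  have "\<exists>M. (\<forall>i<m. card {j\<in>{..<n}. M i j} \<le> (\<lambda>i. fst c ! i) i) \<and>
      (\<forall>j\<in>{..<n}. m - card {i. i < m \<and> M i j} \<le> (\<lambda>j. snd c ! j) j)"
  proof (rule gale_ryser)
    show "finite {..<n}" by simp
    show "\<forall>j\<in>{..<n}. snd c ! j \<le> m" using cb by auto
    show "\<forall>P\<subseteq>{..<m}. \<forall>Q\<subseteq>{..<n}. card P * card Q \<le> sum (\<lambda>i. fst c ! i) P + sum (\<lambda>j. snd c ! j) Q"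
      using cd unfolding condC_def by simp
  qed
  then obtain M where M1: "\<forall>i<m. card {j\<in>{..<n}. M i j} \<le> fst c ! i"
    and M2: "\<forall>j<n. m - card {i. i < m \<and> M i j} \<le> snd c ! j" by auto
  have M1': "\<forall>i<m. card {j. j < n \<and> M i j} \<le> fst c ! i"
  proof (intro allI impI)
    fix i assume "i < m"
    then have "card {j\<in>{..<n}. M i j} \<le> fst c ! i" using M1 by blast
    moreover have "{j\<in>{..<n}. M i j} = {j. j < n \<and> M i j}" by auto
    ultimately show "card {j. j < n \<and> M i j} \<le> fst c ! i" by simp
  qed
  let ?T = "inM m n M"
  have leT: "le_cfg m n ?T c" unfolding le_cfg_def inM_def using M1' M2 by simp
  have stT: "stable_config m n ?T" unfolding stable_config_def inM_def
    using M1' ct by (auto intro: le_less_trans)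
  have cT: "(chain_step p m n)\<^sup>*\<^sup>* (cmax m n) ?T"
  proof (cases "m = 0")
    case True
    have "cmax m n = ?T" unfolding cmax_def inM_def by (rule cfg_cong) (use True in auto)
    then show ?thesis by simp
  next
    case False
    then have m1: "1 \<le> m" by simp
    have "chain_step p m n (cmax m n) ?T"
      unfolding chain_step_def stabilises_to_def
      using cmax_stable[OF n1] avalanche_topples[OF p n1 m1, of M] stT n1
      by (intro conjI exI[of _ m]) auto
    then show ?thesis by simp
  qed
  show ?thesis unfolding stoch_recurrent_def
  proof (intro conjI allI impI)
    show "stable_config m n c" by fact
    fix d assume "(chain_step p m n)\<^sup>*\<^sup>* c d"
    then have std: "stable_config m n d" using chains_stable st by blast
    have "(chain_step p m n)\<^sup>*\<^sup>* d (cmax m n)"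
      using upward[OF std cmax_stable[OF n1] le_cmax[OF std]] .
    also note cT
    also have "(chain_step p m n)\<^sup>*\<^sup>* ?T c" using upward[OF stT st leT] .
    finally show "(chain_step p m n)\<^sup>*\<^sup>* d c" .
  qed
qed

theorem theorem2p5:
  fixes p :: real
  assumes "0 < p" and "p < 1"
  shows "(\<forall>m n c. 1 \<le> n \<and> stable_config m n c \<longrightarrow>
            (fst (ssm_algorithm m n c) \<longleftrightarrow> stoch_recurrent p m n c))
       \<and> (\<exists>C::nat. \<forall>m n c. 1 \<le> n \<and> stable_config m n c \<longrightarrow>
            snd (ssm_algorithm m n c) \<le> C * (m + n))"
proof (intro conjI allI impI)
  fix m n c assume H: "1 \<le> n \<and> stable_config m n c"
  then have n1: "1 \<le> n" and st: "stable_config m n c" by auto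
  have bm: "\<forall>x\<in>set (snd c). x \<le> m"
    using st unfolding stable_config_def config_of_def by (auto simp: in_set_conv_nth less_Suc_eq_le)
  have "fst (ssm_algorithm m n c) \<longleftrightarrow> condC m n c"
    by (rule trans[OF alg_props(1)[OF st n1] PC_iff_cond[OF st counting_sort_props(1,2)[OF bm]]])
  also have "\<dots> \<longleftrightarrow> stoch_recurrent p m n c"
  proof
    assume "condC m n c" then show "stoch_recurrent p m n c" by (rule cond_imp_SR[OF assms n1 st])
  next
    assume "stoch_recurrent p m n c" then show "condC m n c" by (rule SR_imp_cond[OF n1 st])
  qed
  finally show "fst (ssm_algorithm m n c) \<longleftrightarrow> stoch_recurrent p m n c" .
next
  show "\<exists>C::nat. \<forall>m n c. 1 \<le> n \<and> stable_config m n c \<longrightarrow> snd (ssm_algorithm m n c) \<le> C * (m + n)"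
  proof (intro exI[of _ 8] allI impI)
    fix m n c assume H: "1 \<le> n \<and> stable_config m n (c::config)"
    then show "snd (ssm_algorithm m n c) \<le> 8 * (m + n)" using alg_props(2)[of m n c] by blast
  qed
qed

end
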